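(* There exists a constant $C>0$ such that for all integers $n\geq2$ and all $p\in[0,1]$, $$\frac{1}{n-1}\,\mathbb{E}_{n,p}[\tau]\leq C.$$
   Context: $G(n,p)$ is the Erdős–Rényi random graph on $[n]=\{1,\dots,n\}$ with independent edge probability $p$. Given a realization, $(X_t)_{t\ge0}$ is the simple symmetric random walk with $X_0=1$ and $\tau=\inf\{t\ge1:X_t=1\}$, with the convention $\tau=1$ if vertex $1$ is isolated. $\mathbb{E}_{n,p}[\tau]$ is the expectation of $\tau$ over both the walk and the random graph. *)

theory Defs
  imports Complex_Main "HOL-Library.Extended_Nonnegative_Real"
begin

text \<open>Possible edges of a simple graph on [n] = {1..n}: pairs (i,j) with i < j.
  A graph is a set E of such pairs.\<close>
definition pairs :: "nat \<Rightarrow> (nat \<times> nat) set" where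
  "pairs n = {(i, j). 1 \<le> i \<and> i < j \<and> j \<le> n}"

definition adj :: "(nat \<times> nat) set \<Rightarrow> nat \<Rightarrow> nat \<Rightarrow> bool" where
  "adj E u v \<longleftrightarrow> (u, v) \<in> E \<or> (v, u) \<in> E"

definition deg :: "(nat \<times> nat) set \<Rightarrow> nat \<Rightarrow> nat \<Rightarrow> nat" where
  "deg E n u = card {v \<in> {1..n}. adj E u v}"

text \<open>Transition probability of simple random walk (0 from an isolated vertex).\<close>
definition trans :: "(nat \<times> nat) set \<Rightarrow> nat \<Rightarrow> nat \<Rightarrow> nat \<Rightarrow> real" where
  "trans E n u v = (if adj E u v then 1 / real (deg E n u) else 0)"

fun walkprob :: "(nat \<times> nat) set \<Rightarrow> nat \<Rightarrow> nat \<Rightarrow> nat list \<Rightarrow> real" where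
  "walkprob E n u [] = 1"
| "walkprob E n u (v # vs) = trans E n u v * walkprob E n v vs"

text \<open>P(tau > t): X_0 = 1 and X_1, ..., X_t all different from 1.
  (If 1 is isolated, P(tau > 1) = 0, i.e. tau = 1.)\<close>
definition surv :: "(nat \<times> nat) set \<Rightarrow> nat \<Rightarrow> nat \<Rightarrow> real" where
  "surv E n t = (\<Sum>xs \<in> {xs. length xs = t \<and> set xs \<subseteq> {2..n}}. walkprob E n 1 xs)"

text \<open>E[tau] for fixed graph, via the tail-sum formula E[tau] = sum_{t>=0} P(tau > t)
  (valid for any [1,\<infinity>]-valued tau; computed in ennreal).\<close>
definition exp_tau_graph :: "(nat \<times> nat) set \<Rightarrow> nat \<Rightarrow> ennreal" where
  "exp_tau_graph E n = (\<Sum>t. ennreal (surv E n t))"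

definition exp_tau :: "nat \<Rightarrow> real \<Rightarrow> ennreal" where
  "exp_tau n p = (\<Sum>E \<in> Pow (pairs n).
      ennreal (p ^ card E * (1 - p) ^ (card (pairs n) - card E)) * exp_tau_graph E n)"

end

theory Submission
  imports Defs
begin

fun Q :: "(nat \<times> nat) set \<Rightarrow> nat \<Rightarrow> nat \<Rightarrow> nat \<Rightarrow> nat \<Rightarrow> real" where
  "Q E n 0 u v = trans E n u v"
| "Q E n (Suc t) u v = (\<Sum>w\<in>{2..n}. trans E n u w * Q E n t w v)"

definition R :: "(nat \<times> nat) set \<Rightarrow> nat \<Rightarrow> nat \<Rightarrow> nat \<Rightarrow> real" where
  "R E n t u = (\<Sum>xs \<in> {xs. length xs = t \<and> set xs \<subseteq> {2..n}}. walkprob E n u xs)"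

lemma trans_nonneg: "trans E n u v \<ge> 0" by (simp add: trans_def)

lemma Q_nonneg: "Q E n t u v \<ge> 0"
  by (induction t arbitrary: u) (auto intro!: sum_nonneg mult_nonneg_nonneg simp: trans_nonneg)

lemma walkprob_nonneg: "walkprob E n u xs \<ge> 0"
  by (induction xs arbitrary: u) (auto simp: trans_nonneg)

lemma R_0: "R E n 0 u = 1"
proof -
  have "{xs. length xs = 0 \<and> set xs \<subseteq> {2..n}} = {[]}" by auto
  then show ?thesis by (simp add: R_def)
qed

lemma lists_Suc: "{xs. length xs = Suc t \<and> set xs \<subseteq> A} = (\<lambda>(w,ys). w # ys) ` (A \<times> {ys. length ys = t \<and> set ys \<subseteq> A})"
  by (auto simp: length_Suc_conv image_iff)

lemma R_Suc: "R E n (Suc t) u = (\<Sum>w\<in>{2..n}. trans E n u w * R E n t w)"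
proof -
  have inj: "inj_on (\<lambda>(w,ys). w # ys) ({2..n} \<times> {ys. length ys = t \<and> set ys \<subseteq> {2..n}})"
    by (auto simp: inj_on_def)
  have "R E n (Suc t) u = (\<Sum>(w,ys)\<in>{2..n} \<times> {ys. length ys = t \<and> set ys \<subseteq> {2..n}}. walkprob E n u (w # ys))"
    unfolding R_def lists_Suc sum.reindex[OF inj] comp_def by (simp only: case_prod_unfold)
  also have "\<dots> = (\<Sum>w\<in>{2..n}. \<Sum>ys\<in>{ys. length ys = t \<and> set ys \<subseteq> {2..n}}. walkprob E n u (w # ys))"
    by (rule sum.cartesian_product[symmetric])
  also have "\<dots> = (\<Sum>w\<in>{2..n}. trans E n u w * R E n t w)"
    by (simp add: R_def sum_distrib_left)
  finally show ?thesis .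
qed

lemma R_Q: "R E n (Suc t) u = (\<Sum>v\<in>{2..n}. Q E n t u v)"
proof (induction t arbitrary: u)
  case 0
  then show ?case by (simp add: R_Suc R_0)
next
  case (Suc t)
  have "R E n (Suc (Suc t)) u = (\<Sum>w\<in>{2..n}. trans E n u w * (\<Sum>v\<in>{2..n}. Q E n t w v))"
    by (simp add: R_Suc[of E n "Suc t"] Suc)
  also have "\<dots> = (\<Sum>w\<in>{2..n}. \<Sum>v\<in>{2..n}. trans E n u w * Q E n t w v)"
    by (simp add: sum_distrib_left)
  also have "\<dots> = (\<Sum>v\<in>{2..n}. \<Sum>w\<in>{2..n}. trans E n u w * Q E n t w v)"
    by (rule sum.swap)
  also have "\<dots> = (\<Sum>v\<in>{2..n}. Q E n (Suc t) u v)"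
    by simp
  finally show ?case .
qed

lemma Q_last: "Q E n (Suc t) u v = (\<Sum>x\<in>{2..n}. Q E n t u x * trans E n x v)"
proof (induction t arbitrary: u)
  case 0
  then show ?case by simp
next
  case (Suc t)
  have "Q E n (Suc (Suc t)) u v = (\<Sum>w\<in>{2..n}. trans E n u w * (\<Sum>x\<in>{2..n}. Q E n t w x * trans E n x v))"
    using Suc by simp
  also have "\<dots> = (\<Sum>w\<in>{2..n}. \<Sum>x\<in>{2..n}. trans E n u w * Q E n t w x * trans E n x v)"
    by (simp add: sum_distrib_left mult.assoc)
  also have "\<dots> = (\<Sum>x\<in>{2..n}. \<Sum>w\<in>{2..n}. trans E n u w * Q E n t w x * trans E n x v)"
    by (rule sum.swap)
  also have "\<dots> = (\<Sum>x\<in>{2..n}. Q E n (Suc t) u x * trans E n x v)"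
    by (simp add: sum_distrib_right)
  finally show ?case .
qed


lemma adj_sym: "adj E u v = adj E v u" by (auto simp: adj_def)

lemma deg_pos: assumes "v \<in> {1..n}" "adj E x v" shows "deg E n x > 0"
proof -
  have "v \<in> {w \<in> {1..n}. adj E x w}" using assms by auto
  then have "{w \<in> {1..n}. adj E x w} \<noteq> {}" by blast
  then show ?thesis unfolding deg_def by (simp add: card_gt_0_iff)
qed

lemma deg_trans: assumes "v \<in> {1..n}"
  shows "real (deg E n x) * trans E n x v = (if adj E x v then 1 else 0)"
  using deg_pos[OF assms, of E x] by (cases "adj E x v") (auto simp: trans_def)

lemma sum_ind_deg: "(\<Sum>x\<in>{1..n}. (if adj E x v then 1 else 0 :: real)) = real (deg E n v)"
proof -
  have "(\<Sum>x\<in>{1..n}. (if adj E x v then 1 else 0 :: real)) = (\<Sum>x\<in>{x\<in>{1..n}. adj E x v}. 1)"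
    using sum.inter_filter[of "{1..n}" "\<lambda>_. 1::real" "\<lambda>x. adj E x v"] by simp
  also have "\<dots> = real (card {x\<in>{1..n}. adj E v x})" by (simp add: adj_sym)
  finally show ?thesis by (simp add: deg_def)
qed

lemma key:
  assumes "n \<ge> 1"
  shows "\<forall>v\<in>{1..n}. real (deg E n 1) * (\<Sum>t<T. Q E n t 1 v) \<le> real (deg E n v)"
proof (induction T)
  case 0
  then show ?case by simp
next
  case (Suc T)
  show ?case
  proof
    fix v assume v: "v \<in> {1..n}"
    have "(\<Sum>t<Suc T. Q E n t 1 v) = Q E n 0 1 v + (\<Sum>t<T. Q E n (Suc t) 1 v)"
      by (simp add: sum.lessThan_Suc_shift del: sum.lessThan_Suc)
    also have "\<dots> = Q E n 0 1 v + (\<Sum>t<T. \<Sum>x\<in>{2..n}. Q E n t 1 x * trans E n x v)"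
      by (simp only: Q_last)
    also have "(\<Sum>t<T. \<Sum>x\<in>{2..n}. Q E n t 1 x * trans E n x v) = (\<Sum>x\<in>{2..n}. \<Sum>t<T. Q E n t 1 x * trans E n x v)"
      by (rule sum.swap)
    also have "Q E n 0 1 v + (\<Sum>x\<in>{2..n}. \<Sum>t<T. Q E n t 1 x * trans E n x v) = trans E n 1 v + (\<Sum>x\<in>{2..n}. (\<Sum>t<T. Q E n t 1 x) * trans E n x v)"
      by (simp only: Q.simps(1) sum_distrib_right)
    finally have eq: "(\<Sum>t<Suc T. Q E n t 1 v) = trans E n 1 v + (\<Sum>x\<in>{2..n}. (\<Sum>t<T. Q E n t 1 x) * trans E n x v)" .
    have hx: "real (deg E n 1) * ((\<Sum>t<T. Q E n t 1 x) * Defs.trans E n x v) \<le> real (deg E n x) * Defs.trans E n x v"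
      if x: "x \<in> {2..n}" for x
    proof -
      have "real (deg E n 1) * (\<Sum>t<T. Q E n t 1 x) \<le> real (deg E n x)" using Suc.IH x by auto
      then have "(real (deg E n 1) * (\<Sum>t<T. Q E n t 1 x)) * Defs.trans E n x v \<le> real (deg E n x) * Defs.trans E n x v"
        by (rule mult_right_mono) (simp add: trans_nonneg)
      then show ?thesis by (metis mult.assoc)
    qed
    have "real (deg E n 1) * (\<Sum>t<Suc T. Q E n t 1 v) = real (deg E n 1) * Defs.trans E n 1 v + (\<Sum>x\<in>{2..n}. real (deg E n 1) * ((\<Sum>t<T. Q E n t 1 x) * Defs.trans E n x v))"
      by (simp only: eq distrib_left sum_distrib_left)
    also have "\<dots> \<le> real (deg E n 1) * trans E n 1 v + (\<Sum>x\<in>{2..n}. real (deg E n x) * trans E n x v)"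
      by (rule add_left_mono, rule sum_mono, rule hx)
    also have "\<dots> = (\<Sum>x\<in>{1..n}. real (deg E n x) * trans E n x v)"
    proof -
      have "{1..n} = insert 1 {2..n}" using assms by auto
      then show ?thesis by simp
    qed
    also have "\<dots> = real (deg E n v)"
      unfolding deg_trans[OF v] by (rule sum_ind_deg)
    finally show "real (deg E n 1) * (\<Sum>t<Suc T. Q E n t 1 v) \<le> real (deg E n v)" .
  qed
qed

lemma surv_R: "surv E n t = R E n t 1" by (simp add: surv_def R_def)

lemma handshake:
  assumes "E \<subseteq> pairs n"
  shows "(\<Sum>v\<in>{1..n}. real (deg E n v)) \<le> 2 * real (card E)"
proof -
  have pn: "pairs n \<subseteq> {1..n} \<times> {1..n}" unfolding pairs_def by auto
  have finE: "finite E"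
    by (rule finite_subset[OF assms], rule finite_subset[OF pn]) simp
  have "card (SIGMA v:{1..n}. {u\<in>{1..n}. adj E v u}) = (\<Sum>v\<in>{1..n}. card {u\<in>{1..n}. adj E v u})"
    by (rule card_SigmaI) auto
  then have eq: "(\<Sum>v\<in>{1..n}. deg E n v) = card (SIGMA v:{1..n}. {u\<in>{1..n}. adj E v u})"
    unfolding deg_def by simp
  have sub: "(SIGMA v:{1..n}. {u\<in>{1..n}. adj E v u}) \<subseteq> E \<union> E\<inverse>"
  proof
    fix p assume "p \<in> (SIGMA v:{1..n}. {u\<in>{1..n}. adj E v u})"
    then obtain a b where p: "p = (a, b)" and ab: "adj E a b" by auto
    show "p \<in> E \<union> E\<inverse>" using ab unfolding p adj_def by auto
  qed
  have "finite (E \<union> E\<inverse>)" using finE by simp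
  then have "card (SIGMA v:{1..n}. {u\<in>{1..n}. adj E v u}) \<le> card (E \<union> E\<inverse>)"
    by (rule card_mono[OF _ sub])
  also have "\<dots> \<le> card E + card (E\<inverse>)" by (rule card_Un_le)
  also have "card (E\<inverse>) = card E" by (rule card_inverse)
  finally have "(\<Sum>v\<in>{1..n}. deg E n v) \<le> 2 * card E" unfolding eq by linarith
  then have "real (\<Sum>v\<in>{1..n}. deg E n v) \<le> real (2 * card E)" by (rule of_nat_mono)
  then show ?thesis by simp
qed

lemma partial_bound:
  assumes "E \<subseteq> pairs n" "n \<ge> 1"
  shows "real (deg E n 1) * (\<Sum>t<T. surv E n t) \<le> 2 * real (card E)"
proof (cases T)
  case 0
  then show ?thesis by simp
next
  case (Suc T')
  have "(\<Sum>t<T. surv E n t) = 1 + (\<Sum>t<T'. \<Sum>v\<in>{2..n}. Q E n t 1 v)"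
    unfolding Suc by (simp add: sum.lessThan_Suc_shift surv_R R_0 R_Q del: sum.lessThan_Suc)
  also have "\<dots> = 1 + (\<Sum>v\<in>{2..n}. \<Sum>t<T'. Q E n t 1 v)"
    by (rule arg_cong[where f="\<lambda>x. 1 + x"], rule sum.swap)
  finally have eq: "(\<Sum>t<T. surv E n t) = 1 + (\<Sum>v\<in>{2..n}. \<Sum>t<T'. Q E n t 1 v)" .
  have "real (deg E n 1) * (\<Sum>t<T. surv E n t) = real (deg E n 1) + (\<Sum>v\<in>{2..n}. real (deg E n 1) * (\<Sum>t<T'. Q E n t 1 v))"
    unfolding eq by (simp add: distrib_left sum_distrib_left)
  also have "\<dots> \<le> real (deg E n 1) + (\<Sum>v\<in>{2..n}. real (deg E n v))"
    using key[OF assms(2), of E T'] by (intro add_left_mono sum_mono) auto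
  also have "\<dots> = (\<Sum>v\<in>{1..n}. real (deg E n v))"
  proof -
    have "{1..n} = insert 1 {2..n}" using assms by auto
    then show ?thesis by simp
  qed
  also have "\<dots> \<le> 2 * real (card E)" by (rule handshake[OF assms(1)])
  finally show ?thesis .
qed

lemma surv_nonneg: "surv E n t \<ge> 0"
  unfolding surv_def by (intro sum_nonneg) (simp add: walkprob_nonneg)

lemma partial_isolated:
  assumes "deg E n 1 = 0"
  shows "(\<Sum>t<T. surv E n t) \<le> 1"
proof (cases T)
  case 0
  then show ?thesis by simp
next
  case (Suc T')
  have z: "\<And>w. trans E n 1 w = 0" using assms by (simp add: trans_def)
  have s0: "surv E n (Suc t) = 0" for t
  proof -
    have "surv E n (Suc t) = (\<Sum>w\<in>{2..n}. trans E n 1 w * R E n t w)" by (simp only: surv_R R_Suc)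
    also have "\<dots> = 0" by (simp only: z mult_zero_left sum.neutral_const)
    finally show ?thesis .
  qed
  have "(\<Sum>t<Suc T'. surv E n t) = surv E n 0 + (\<Sum>t<T'. surv E n (Suc t))" by (rule sum.lessThan_Suc_shift)
  also have "\<dots> = 1" unfolding s0 by (simp add: surv_R R_0)
  finally show ?thesis unfolding Suc by simp
qed

definition bnd :: "(nat \<times> nat) set \<Rightarrow> nat \<Rightarrow> real" where
  "bnd E n = (if deg E n 1 = 0 then 1 else 2 * real (card E) / real (deg E n 1))"

lemma graph_bound:
  assumes "E \<subseteq> pairs n" "n \<ge> 1"
  shows "exp_tau_graph E n \<le> ennreal (bnd E n)"
proof -
  have "\<And>T. (\<Sum>t<T. surv E n t) \<le> bnd E n"
  proof -
    fix T
    show "(\<Sum>t<T. surv E n t) \<le> bnd E n"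
    proof (cases "deg E n 1 = 0")
      case True
      then show ?thesis using partial_isolated[OF True] by (simp add: bnd_def)
    next
      case False
      have pos: "0 < real (deg E n 1)" using False by simp
      have "(\<Sum>t<T. surv E n t) * real (deg E n 1) \<le> 2 * real (card E)"
        using partial_bound[OF assms, of T] by (metis mult.commute)
      then show ?thesis unfolding bnd_def if_not_P[OF False] using pos_le_divide_eq[OF pos] by blast
    qed
  qed
  then have "\<And>T. (\<Sum>t<T. ennreal (surv E n t)) \<le> ennreal (bnd E n)"
    by (subst sum_ennreal) (auto simp: surv_nonneg intro: ennreal_leI)
  then show ?thesis unfolding exp_tau_graph_def suminf_eq_SUP by (rule SUP_least)
qed

lemma binom_one:
  fixes p q :: real assumes "p + q = 1"
  shows "(\<Sum>k\<le>N. real (N choose k) * p^k * q^(N-k)) = 1"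
  using binomial_ring[of p q N] assms by simp

lemma binom_mean:
  fixes p q :: real assumes "p + q = 1"
  shows "(\<Sum>k\<le>N. real (N choose k) * p^k * q^(N-k) * real k) = real N * p"
proof (cases N)
  case 0
  then show ?thesis by simp
next
  case (Suc M)
  have t: "real (Suc M choose Suc j) * p ^ Suc j * q ^ (Suc M - Suc j) * real (Suc j)
      = real (Suc M) * p * (real (M choose j) * p ^ j * q ^ (M - j))" for j
  proof -
    have "real (Suc M) * real (M choose j) = real (Suc M choose Suc j) * real (Suc j)"
      using Suc_times_binomial_eq[of M j] by (metis of_nat_mult)
    then have "real (Suc M choose Suc j) * p ^ Suc j * q ^ (Suc M - Suc j) * real (Suc j)
      = (real (Suc M) * real (M choose j)) * (p * p^j * q^(M-j))"
      by (simp only: power_Suc diff_Suc_Suc mult_ac)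
    then show ?thesis by (simp only: mult_ac)
  qed
  have "(\<Sum>k\<le>N. real (N choose k) * p^k * q^(N-k) * real k)
      = (\<Sum>j\<le>M. real (Suc M choose Suc j) * p ^ Suc j * q ^ (Suc M - Suc j) * real (Suc j))"
    unfolding Suc by (subst sum.atMost_Suc_shift) simp
  also have "\<dots> = real (Suc M) * p * (\<Sum>j\<le>M. real (M choose j) * p ^ j * q ^ (M - j))"
    unfolding t by (simp add: sum_distrib_left)
  also have "\<dots> = real N * p" using binom_one[OF assms, of M] Suc by simp
  finally show ?thesis .
qed

lemma binom_inv:
  fixes p q :: real assumes "p + q = 1" "0 \<le> p" "0 \<le> q"
  shows "(\<Sum>k\<le>m. real (m choose k) * p^k * q^(m-k) * (p / real (k+1))) \<le> 1 / real (m+1)"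
proof -
  have t: "real (Suc m) * (real (m choose k) * p^k * q^(m-k) * (p / real (k+1)))
      = real (Suc m choose Suc k) * p ^ Suc k * q ^ (Suc m - Suc k)" for k
  proof -
    have "real (Suc m) * real (m choose k) = real (Suc m choose Suc k) * real (Suc k)"
      using Suc_times_binomial_eq[of m k] by (metis of_nat_mult)
    then have "real (Suc m) * (real (m choose k) * p^k * q^(m-k) * (p / real (k+1)))
       = (real (Suc m choose Suc k) * real (Suc k)) * (p^k * q^(m-k) * (p / real (k+1)))"
      by (metis mult.assoc)
    also have "\<dots> = real (Suc m choose Suc k) * p ^ Suc k * q ^ (Suc m - Suc k) * (real (Suc k) / real (k+1))"
      by (simp only: power_Suc diff_Suc_Suc mult_ac times_divide_eq_right)
    also have "\<dots> = real (Suc m choose Suc k) * p ^ Suc k * q ^ (Suc m - Suc k)"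
      by simp
    finally show ?thesis .
  qed
  have "real (Suc m) * (\<Sum>k\<le>m. real (m choose k) * p^k * q^(m-k) * (p / real (k+1)))
      = (\<Sum>k\<le>m. real (Suc m choose Suc k) * p ^ Suc k * q ^ (Suc m - Suc k))"
    unfolding sum_distrib_left t ..
  also have "\<dots> \<le> q ^ Suc m + (\<Sum>k\<le>m. real (Suc m choose Suc k) * p ^ Suc k * q ^ (Suc m - Suc k))"
    using assms by simp
  also have "\<dots> = 1"
    using binom_one[OF assms(1), of "Suc m"] by (subst (asm) sum.atMost_Suc_shift) simp
  finally show ?thesis by (simp add: field_simps)
qed

lemma sum_pow_card:
  fixes f :: "nat \<Rightarrow> real"
  assumes "finite X"
  shows "(\<Sum>S\<in>Pow X. f (card S)) = (\<Sum>k\<le>card X. real (card X choose k) * f k)"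
proof -
  have "(\<Sum>S\<in>Pow X. f (card S)) = (\<Sum>k\<le>card X. \<Sum>S\<in>{S \<in> Pow X. card S = k}. f (card S))"
  proof (rule sum.group[symmetric])
    show "finite (Pow X)" using assms by simp
    show "finite {..card X}" by simp
    show "card ` Pow X \<subseteq> {..card X}" using assms by (auto intro: card_mono)
  qed
  also have "\<dots> = (\<Sum>k\<le>card X. real (card X choose k) * f k)"
  proof (rule sum.cong[OF refl])
    fix k
    have e: "{S \<in> Pow X. card S = k} = {S. S \<subseteq> X \<and> card S = k}" by auto
    have "(\<Sum>S\<in>{S \<in> Pow X. card S = k}. f (card S)) = (\<Sum>S\<in>{S \<in> Pow X. card S = k}. f k)"
      by (rule sum.cong) auto
    also have "\<dots> = real (card {S \<in> Pow X. card S = k}) * f k" by simp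
    also have "\<dots> = real (card X choose k) * f k" unfolding e n_subsets[OF assms] ..
    finally show "(\<Sum>S\<in>{S \<in> Pow X. card S = k}. f (card S)) = real (card X choose k) * f k" .
  qed
  finally show ?thesis .
qed

definition P1 :: "nat \<Rightarrow> (nat \<times> nat) set" where "P1 n = {e \<in> pairs n. fst e = 1}"
definition P2 :: "nat \<Rightarrow> (nat \<times> nat) set" where "P2 n = {e \<in> pairs n. fst e \<noteq> 1}"

lemma pairs_sub: "pairs n \<subseteq> {1..n} \<times> {1..n}" unfolding pairs_def by auto

lemma fin_pairs: "finite (pairs n)"
  by (rule finite_subset[OF pairs_sub]) simp

lemma P12_disj: "P1 n \<inter> P2 n = {}" unfolding P1_def P2_def by blast
lemma P12_un: "P1 n \<union> P2 n = pairs n" unfolding P1_def P2_def by blast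
lemma fin_P1: "finite (P1 n)" using fin_pairs unfolding P1_def by simp
lemma fin_P2: "finite (P2 n)" using fin_pairs unfolding P2_def by simp

lemma card_P1: "card (P1 n) = n - 1"
proof -
  have "P1 n = (\<lambda>j. (1, j)) ` {2..n}" unfolding P1_def pairs_def by auto
  moreover have "inj_on (\<lambda>j. (1::nat, j)) {2..n}" by (auto simp: inj_on_def)
  ultimately show ?thesis by (simp add: card_image)
qed

lemma card_P2: "card (P2 n) \<le> n * n"
proof -
  have "P2 n \<subseteq> {1..n} \<times> {1..n}" using pairs_sub unfolding P2_def by blast
  then have "card (P2 n) \<le> card ({1..n} \<times> {1..n})" by (rule card_mono[rotated]) simp
  then show ?thesis by (simp add: card_cartesian_product)
qed

lemma card_pairs: "card (pairs n) = card (P1 n) + card (P2 n)"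
  using card_Un_disjoint[OF fin_P1 fin_P2 P12_disj] P12_un by simp

lemma deg1:
  assumes "E \<subseteq> pairs n"
  shows "deg E n 1 = card (E \<inter> P1 n)"
proof -
  have "{v \<in> {1..n}. adj E 1 v} = snd ` (E \<inter> P1 n)"
  proof
    show "{v \<in> {1..n}. adj E 1 v} \<subseteq> snd ` (E \<inter> P1 n)"
    proof
      fix v assume v: "v \<in> {v \<in> {1..n}. adj E 1 v}"
      then have "(1, v) \<in> E \<or> (v, 1) \<in> E" by (simp add: adj_def)
      moreover have "(v, 1) \<notin> E" using assms unfolding pairs_def by auto
      ultimately have "(1, v) \<in> E" by blast
      then have "(1, v) \<in> E \<inter> P1 n" using assms unfolding P1_def by auto
      then show "v \<in> snd ` (E \<inter> P1 n)" by force
    qed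
    show "snd ` (E \<inter> P1 n) \<subseteq> {v \<in> {1..n}. adj E 1 v}"
      using assms unfolding P1_def pairs_def adj_def by force
  qed
  moreover have "inj_on snd (E \<inter> P1 n)"
    unfolding P1_def inj_on_def by (metis (mono_tags, lifting) IntD2 mem_Collect_eq prod.expand)
  ultimately show ?thesis unfolding deg_def by (simp add: card_image)
qed

lemma cardE:
  assumes "E \<subseteq> pairs n"
  shows "card E = card (E \<inter> P1 n) + card (E \<inter> P2 n)"
proof -
  have "E = (E \<inter> P1 n) \<union> (E \<inter> P2 n)" using assms P12_un by blast
  moreover have "finite (E \<inter> P1 n)" "finite (E \<inter> P2 n)" using fin_P1 fin_P2 by auto
  moreover have "(E \<inter> P1 n) \<inter> (E \<inter> P2 n) = {}" using P12_disj by blast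
  ultimately show ?thesis by (metis card_Un_disjoint)
qed

lemma sum_split:
  fixes h :: "(nat \<times> nat) set \<Rightarrow> (nat \<times> nat) set \<Rightarrow> real"
  shows "(\<Sum>E\<in>Pow (pairs n). h (E \<inter> P1 n) (E \<inter> P2 n)) = (\<Sum>A\<in>Pow (P1 n). \<Sum>B\<in>Pow (P2 n). h A B)"
proof -
  have "(\<Sum>E\<in>Pow (pairs n). h (E \<inter> P1 n) (E \<inter> P2 n)) = (\<Sum>AB\<in>Pow (P1 n) \<times> Pow (P2 n). h (fst AB) (snd AB))"
  proof (rule sum.reindex_bij_witness[where i="\<lambda>AB. fst AB \<union> snd AB" and j="\<lambda>E. (E \<inter> P1 n, E \<inter> P2 n)"])
    fix E assume "E \<in> Pow (pairs n)"
    then show "fst (E \<inter> P1 n, E \<inter> P2 n) \<union> snd (E \<inter> P1 n, E \<inter> P2 n) = E" using P12_un by auto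
    show "(E \<inter> P1 n, E \<inter> P2 n) \<in> Pow (P1 n) \<times> Pow (P2 n)" by auto
    show "h (fst (E \<inter> P1 n, E \<inter> P2 n)) (snd (E \<inter> P1 n, E \<inter> P2 n)) = h (E \<inter> P1 n) (E \<inter> P2 n)" by simp
  next
    fix AB assume ab: "AB \<in> Pow (P1 n) \<times> Pow (P2 n)"
    then show "((fst AB \<union> snd AB) \<inter> P1 n, (fst AB \<union> snd AB) \<inter> P2 n) = AB"
      using P12_disj[of n] by (cases AB) auto
    show "fst AB \<union> snd AB \<in> Pow (pairs n)" using ab P12_un[of n] by auto
  qed
  also have "\<dots> = (\<Sum>A\<in>Pow (P1 n). \<Sum>B\<in>Pow (P2 n). h A B)"
    by (simp only: sum.cartesian_product' fst_conv snd_conv)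
  finally show ?thesis .
qed

definition FF :: "nat \<Rightarrow> nat \<Rightarrow> real" where
  "FF a b = (if a = 0 then 1 else 2 + 2 * real b / real a)"

lemma inner_bound:
  fixes p q :: real assumes pq: "p + q = 1" "0 \<le> p" "0 \<le> q"
  shows "(\<Sum>b\<le>N. real (N choose b) * (p^b * q^(N-b)) * FF a b) \<le> 3 + 4 * real N * p / real (a+1)"
proof (cases "a = 0")
  case True
  have "(\<Sum>b\<le>N. real (N choose b) * (p^b * q^(N-b)) * FF a b) = (\<Sum>b\<le>N. real (N choose b) * p^b * q^(N-b))"
    using True by (simp add: FF_def mult.assoc)
  also have "\<dots> = 1" by (rule binom_one[OF pq(1)])
  finally have e: "(\<Sum>b\<le>N. real (N choose b) * (p^b * q^(N-b)) * FF a b) = 1" .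
  have "0 \<le> 4 * real N * p / real (a+1)" using pq by simp
  then show ?thesis using e by linarith
next
  case False
  have t: "real (N choose b) * (p^b * q^(N-b)) * FF a b
      = 2 * (real (N choose b) * p^b * q^(N-b)) + (2 / real a) * (real (N choose b) * p^b * q^(N-b) * real b)" for b
    using False by (simp add: FF_def field_simps)
  have "(\<Sum>b\<le>N. real (N choose b) * (p^b * q^(N-b)) * FF a b)
      = 2 * (\<Sum>b\<le>N. real (N choose b) * p^b * q^(N-b)) + (2 / real a) * (\<Sum>b\<le>N. real (N choose b) * p^b * q^(N-b) * real b)"
    unfolding t sum.distrib sum_distrib_left ..
  also have "\<dots> = 2 + (2 / real a) * (real N * p)"
    unfolding binom_one[OF pq(1)] binom_mean[OF pq(1)] by simp
  also have "\<dots> \<le> 3 + 4 * real N * p / real (a+1)"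
  proof -
    have a1: "real a \<ge> 1" using False by simp
    have "2 / real a \<le> 4 / real (a+1)" using a1 by (simp add: field_simps)
    then have "(2 / real a) * (real N * p) \<le> (4 / real (a+1)) * (real N * p)"
      by (rule mult_right_mono) (simp add: pq)
    then show ?thesis by simp
  qed
  finally show ?thesis .
qed

lemma outer_bound:
  fixes p q :: real assumes pq: "p + q = 1" "0 \<le> p" "0 \<le> q"
  shows "(\<Sum>a\<le>m. real (m choose a) * (p^a * q^(m-a)) * (3 + 4 * real N * p / real (a+1))) \<le> 3 + 4 * real N / real (m+1)"
proof -
  have t: "real (m choose a) * (p^a * q^(m-a)) * (3 + 4 * real N * p / real (a+1))
     = 3 * (real (m choose a) * p^a * q^(m-a)) + (4 * real N) * (real (m choose a) * p^a * q^(m-a) * (p / real (a+1)))" for a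
    by (simp add: field_simps)
  have "(\<Sum>a\<le>m. real (m choose a) * (p^a * q^(m-a)) * (3 + 4 * real N * p / real (a+1)))
     = 3 * (\<Sum>a\<le>m. real (m choose a) * p^a * q^(m-a)) + (4 * real N) * (\<Sum>a\<le>m. real (m choose a) * p^a * q^(m-a) * (p / real (a+1)))"
    unfolding t sum.distrib sum_distrib_left ..
  also have "\<dots> \<le> 3 * 1 + (4 * real N) * (1 / real (m+1))"
    unfolding binom_one[OF pq(1)]
    by (intro add_left_mono mult_left_mono binom_inv[OF pq]) simp
  finally show ?thesis by simp
qed

lemma total_bound:
  assumes n: "n \<ge> 2" and p: "0 \<le> p" "p \<le> 1"
  shows "exp_tau n p \<le> ennreal (3 + 4 * real (card (P2 n)) / real n)"
proof -
  define q where "q = 1 - p"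
  define m where "m = card (P1 n)"
  define N where "N = card (P2 n)"
  have pq: "p + q = 1" "0 \<le> p" "0 \<le> q" using p by (auto simp: q_def)
  have m: "m = n - 1" unfolding m_def by (rule card_P1)
  define w where "w E = p ^ card E * (1 - p) ^ (card (pairs n) - card E)" for E :: "(nat \<times> nat) set"
  define \<Phi> where "\<Phi> a b = (p^a * q^(m-a)) * (real 1 * (p^b * q^(N-b)) * FF a b)" for a b
  have w_nonneg: "0 \<le> w E" for E using p by (simp add: w_def)
  have bnd_nonneg: "0 \<le> bnd E n" for E by (simp add: bnd_def)
  have wb: "w E * bnd E n = \<Phi> (card (E \<inter> P1 n)) (card (E \<inter> P2 n))" if E: "E \<in> Pow (pairs n)" for E
  proof -
    define a where "a = card (E \<inter> P1 n)"
    define b where "b = card (E \<inter> P2 n)"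
    have Es: "E \<subseteq> pairs n" using E by simp
    have am: "a \<le> m" unfolding a_def m_def by (rule card_mono[OF fin_P1]) simp
    have bN: "b \<le> N" unfolding b_def N_def by (rule card_mono[OF fin_P2]) simp
    have cE: "card E = a + b" unfolding a_def b_def by (rule cardE[OF Es])
    have cP: "card (pairs n) = m + N" unfolding m_def N_def by (rule card_pairs)
    have "card (pairs n) - card E = (m - a) + (N - b)" using am bN cE cP by simp
    then have wE: "w E = (p^a * q^(m-a)) * (p^b * q^(N-b))"
      unfolding w_def q_def cE by (simp add: power_add mult_ac)
    have d1: "deg E n 1 = a" unfolding a_def by (rule deg1[OF Es])
    have bE: "bnd E n = FF a b"
    proof (cases "a = 0")
      case True
      then show ?thesis unfolding bnd_def FF_def d1 by simp
    next
      case False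
      then have "bnd E n = 2 * real (a + b) / real a" unfolding bnd_def d1 cE by simp
      also have "\<dots> = 2 + 2 * real b / real a" using False by (simp add: field_simps)
      finally show ?thesis using False by (simp add: FF_def)
    qed
    show ?thesis unfolding wE bE \<Phi>_def a_def[symmetric] b_def[symmetric] by simp
  qed
  have "exp_tau n p = (\<Sum>E\<in>Pow (pairs n). ennreal (w E) * exp_tau_graph E n)"
    unfolding exp_tau_def w_def ..
  also have "\<dots> \<le> (\<Sum>E\<in>Pow (pairs n). ennreal (w E) * ennreal (bnd E n))"
  proof (rule sum_mono)
    fix E assume "E \<in> Pow (pairs n)"
    then have "exp_tau_graph E n \<le> ennreal (bnd E n)" using graph_bound[of E n] n by simp
    then show "ennreal (w E) * exp_tau_graph E n \<le> ennreal (w E) * ennreal (bnd E n)"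
      by (rule mult_left_mono) simp
  qed
  also have "\<dots> = ennreal (\<Sum>E\<in>Pow (pairs n). w E * bnd E n)"
    using w_nonneg bnd_nonneg by (simp add: ennreal_mult[symmetric])
  also have "(\<Sum>E\<in>Pow (pairs n). w E * bnd E n) = (\<Sum>E\<in>Pow (pairs n). \<Phi> (card (E \<inter> P1 n)) (card (E \<inter> P2 n)))"
    by (rule sum.cong[OF refl]) (rule wb)
  also have "\<dots> = (\<Sum>A\<in>Pow (P1 n). \<Sum>B\<in>Pow (P2 n). \<Phi> (card A) (card B))"
    by (rule sum_split)
  also have "\<dots> = (\<Sum>A\<in>Pow (P1 n). \<Sum>b\<le>N. real (N choose b) * \<Phi> (card A) b)"
    unfolding N_def by (rule sum.cong[OF refl], rule sum_pow_card[OF fin_P2])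
  also have "\<dots> = (\<Sum>a\<le>m. real (m choose a) * (\<Sum>b\<le>N. real (N choose b) * \<Phi> a b))"
    unfolding m_def by (rule sum_pow_card[OF fin_P1, where f="\<lambda>a. \<Sum>b\<le>N. real (N choose b) * \<Phi> a b"])
  also have "\<dots> \<le> (\<Sum>a\<le>m. real (m choose a) * (p^a * q^(m-a)) * (3 + 4 * real N * p / real (a+1)))"
  proof (rule sum_mono)
    fix a
    have "(\<Sum>b\<le>N. real (N choose b) * \<Phi> a b) = (p^a * q^(m-a)) * (\<Sum>b\<le>N. real (N choose b) * (p^b * q^(N-b)) * FF a b)"
      unfolding \<Phi>_def sum_distrib_left by (simp add: mult_ac)
    also have "\<dots> \<le> (p^a * q^(m-a)) * (3 + 4 * real N * p / real (a+1))"
      by (rule mult_left_mono[OF inner_bound[OF pq]]) (simp add: pq)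
    finally show "real (m choose a) * (\<Sum>b\<le>N. real (N choose b) * \<Phi> a b) \<le> real (m choose a) * (p^a * q^(m-a)) * (3 + 4 * real N * p / real (a+1))"
      by (simp add: mult_left_mono mult.assoc)
  qed
  also have "\<dots> \<le> 3 + 4 * real N / real (m+1)" by (rule outer_bound[OF pq])
  also have "real (m+1) = real n" using m n by simp
  finally show ?thesis unfolding N_def by (simp add: ennreal_leI)
qed

theorem lemma2:
  shows "\<exists>C::real. C > 0 \<and> (\<forall>n::nat. \<forall>p::real. n \<ge> 2 \<longrightarrow> 0 \<le> p \<longrightarrow> p \<le> 1 \<longrightarrow>
           exp_tau n p / ennreal (real n - 1) \<le> ennreal C)"
proof (intro exI[of _ 11] conjI allI impI)
  show "(0::real) < 11" by simp
  fix n :: nat and p :: real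
  assume n: "n \<ge> 2" and p0: "0 \<le> p" and p1: "p \<le> 1"
  have pos: "0 < real n - 1" using n by simp
  have "3 + 4 * real (card (P2 n)) / real n \<le> 3 + 4 * (real n * real n) / real n"
    using card_P2[of n] n by (intro add_left_mono divide_right_mono mult_left_mono) (simp_all, metis of_nat_le_iff of_nat_mult)
  also have "\<dots> = 3 + 4 * real n" using n by simp
  also have "\<dots> \<le> 11 * (real n - 1)" using n by simp
  finally have "exp_tau n p \<le> ennreal (11 * (real n - 1))"
    using total_bound[OF n p0 p1] by (meson ennreal_leI order_trans)
  then have "exp_tau n p / ennreal (real n - 1) \<le> ennreal (11 * (real n - 1)) / ennreal (real n - 1)"
    by (rule divide_right_mono_ennreal)
  also have "\<dots> = ennreal (11 * (real n - 1) / (real n - 1))"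
    by (rule divide_ennreal) (use pos in simp_all)
  also have "11 * (real n - 1) / (real n - 1) = 11"
    using pos by (subst nonzero_mult_div_cancel_right) auto
  finally show "exp_tau n p / ennreal (real n - 1) \<le> ennreal 11" .
qed

end
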